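(* Let $\Omega=[-R,R]^d$ with $R>0$, let $k\in\mathbb{Z}_+$ with $k\ge1$, $T>0$, and $\mathbf{y}=(y_\alpha)_{\|\alpha\|_1\le k}\in\mathbb{R}^{\binom{k+d}{d}}$. If $u_0^k$ is a solution of $(P_{\Omega,k})$ with data $\mathbf{y}$, then $$\|u_0^k\|_{\mathrm{TV}}\le\|\mathbf{y}\|_\infty\sqrt{\tfrac{k}{\pi}}\exp\Big(k\big(1+2d/R+\ln\sqrt{k}\big)\Big)\max\{T^{\lfloor k/2\rfloor},1\}.$$
   Context: $\mathcal{M}(\Omega)$: signed Radon measures on $\Omega$ of finite total variation, with total variation norm $\|\cdot\|_{\mathrm{TV}}$. Multi-index notation $x^\alpha=x_1^{\alpha_1}\cdots x_d^{\alpha_d}$, $\|\alpha\|_1=\sum_i\alpha_i$. $A$ is the matrix indexed by $\{\alpha\in\mathbb{Z}_+^d:\|\alpha\|_1\le k\}$ with $A_{\alpha,\alpha'}=\alpha_i(\alpha_i-1)$ if $\alpha'=\alpha-2e_i$ for some $i$, and $0$ otherwise. Problem $(P_{\Omega,k})$: minimize $\|u_0\|_{\mathrm{TV}}$ over $u_0\in\mathcal{M}(\Omega)$ subject to $\int_\Omega x^\alpha\,du_0(x)=(e^{-TA}\mathbf{y})_\alpha$ for all $\|\alpha\|_1\le k$. *)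

theory Defs
  imports "HOL-Analysis.Analysis"
begin

text \<open>Multi-indices alpha in Z_+^d are functions 'n => nat, with d = CARD('n).\<close>

definition mi_norm1 :: "('n::finite \<Rightarrow> nat) \<Rightarrow> nat" where
  "mi_norm1 \<alpha> = (\<Sum>i\<in>UNIV. \<alpha> i)"

definition multi_indices :: "nat \<Rightarrow> ('n::finite \<Rightarrow> nat) set" where
  "multi_indices k = {\<alpha>. mi_norm1 \<alpha> \<le> k}"

definition monomial :: "('n::finite \<Rightarrow> nat) \<Rightarrow> real^'n \<Rightarrow> real" where
  "monomial \<alpha> x = (\<Prod>i\<in>UNIV. (x $ i) ^ (\<alpha> i))"

definition cube :: "real \<Rightarrow> (real^'n::finite) set" where
  "cube R = {x. \<forall>i. \<bar>x $ i\<bar> \<le> R}"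

definition Amat :: "('n::finite \<Rightarrow> nat) \<Rightarrow> ('n \<Rightarrow> nat) \<Rightarrow> real" where
  "Amat \<alpha> \<beta> =
     (if \<exists>i. 2 \<le> \<alpha> i \<and> \<beta> = \<alpha>(i := \<alpha> i - 2)
      then (let i = (SOME i. 2 \<le> \<alpha> i \<and> \<beta> = \<alpha>(i := \<alpha> i - 2))
            in real (\<alpha> i * (\<alpha> i - 1)))
      else 0)"

definition matvec :: "nat \<Rightarrow> (('n::finite \<Rightarrow> nat) \<Rightarrow> ('n \<Rightarrow> nat) \<Rightarrow> real)
    \<Rightarrow> (('n \<Rightarrow> nat) \<Rightarrow> real) \<Rightarrow> (('n \<Rightarrow> nat) \<Rightarrow> real)" where
  "matvec k M y = (\<lambda>\<alpha>. \<Sum>\<beta>\<in>multi_indices k. M \<alpha> \<beta> * y \<beta>)"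

definition expTA :: "nat \<Rightarrow> real \<Rightarrow> (('n::finite \<Rightarrow> nat) \<Rightarrow> real) \<Rightarrow> ('n \<Rightarrow> nat) \<Rightarrow> real" where
  "expTA k T y \<alpha> = (\<Sum>j. ((- T) ^ j / fact j) * ((matvec k Amat) ^^ j) y \<alpha>)"

definition sup_norm :: "nat \<Rightarrow> (('n::finite \<Rightarrow> nat) \<Rightarrow> real) \<Rightarrow> real" where
  "sup_norm k y = Max ((\<lambda>\<alpha>. \<bar>y \<alpha>\<bar>) ` multi_indices k)"

text \<open>A finite signed Radon measure on Omega is represented as P - N, where P, N are
  finite Borel measures on real^'n concentrated on Omega.\<close>
definition signed_meas_on :: "(real^'n::finite) set \<Rightarrow> (real^'n) measure \<Rightarrow> (real^'n) measure \<Rightarrow> bool" where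
  "signed_meas_on \<Omega> P N \<longleftrightarrow>
     sets P = sets borel \<and> sets N = sets borel \<and> finite_measure P \<and> finite_measure N \<and>
     emeasure P (UNIV - \<Omega>) = 0 \<and> emeasure N (UNIV - \<Omega>) = 0"

definition tv_norm :: "'a measure \<Rightarrow> 'a measure \<Rightarrow> real" where
  "tv_norm P N = Sup {(\<Sum>A\<in>\<A>. \<bar>measure P A - measure N A\<bar>) | \<A>.
       finite \<A> \<and> \<A> \<subseteq> sets P \<and> disjoint \<A>}"

definition signed_integral :: "'a measure \<Rightarrow> 'a measure \<Rightarrow> ('a \<Rightarrow> real) \<Rightarrow> real" where
  "signed_integral P N f = integral\<^sup>L P f - integral\<^sup>L N f"

definition feasible :: "(real^'n::finite) set \<Rightarrow> nat \<Rightarrow> real \<Rightarrow> (('n \<Rightarrow> nat) \<Rightarrow> real)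
    \<Rightarrow> (real^'n) measure \<Rightarrow> (real^'n) measure \<Rightarrow> bool" where
  "feasible \<Omega> k T y P N \<longleftrightarrow> signed_meas_on \<Omega> P N \<and>
     (\<forall>\<alpha>\<in>multi_indices k. signed_integral P N (monomial \<alpha>) = expTA k T y \<alpha>)"

definition is_solution :: "(real^'n::finite) set \<Rightarrow> nat \<Rightarrow> real \<Rightarrow> (('n \<Rightarrow> nat) \<Rightarrow> real)
    \<Rightarrow> (real^'n) measure \<Rightarrow> (real^'n) measure \<Rightarrow> bool" where
  "is_solution \<Omega> k T y P N \<longleftrightarrow> feasible \<Omega> k T y P N \<and>
     (\<forall>P' N'. feasible \<Omega> k T y P' N' \<longrightarrow> tv_norm P N \<le> tv_norm P' N')"

end

theory Submission
  imports Defs "HOL-Computational_Algebra.Polynomial"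
begin

definition dmeas :: "'i set \<Rightarrow> ('i \<Rightarrow> real) \<Rightarrow> ('i \<Rightarrow> real^'n::finite) \<Rightarrow> (real^'n) measure" where
  "dmeas I f pt = distr (density (count_space I) (\<lambda>i. ennreal (f i))) borel pt"

lemma dmeas_sets[simp]: "sets (dmeas I f pt) = sets borel"
  by (simp add: dmeas_def)

lemma dmeas_space[simp]: "space (dmeas I f pt) = UNIV"
  by (simp add: dmeas_def)

lemma dmeas_emeasure:
  assumes "A \<in> sets borel"
  shows "emeasure (dmeas I f pt) A = emeasure (density (count_space I) (\<lambda>i. ennreal (f i))) (pt -` A \<inter> I)"
  using assms unfolding dmeas_def
  by (subst emeasure_distr) auto

lemma dmeas_emeasure_UNIV:
  assumes "finite I"
  shows "emeasure (dmeas I f pt) UNIV = (\<Sum>i\<in>I. ennreal (f i))"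
proof -
  have "emeasure (dmeas I f pt) UNIV = emeasure (density (count_space I) (\<lambda>i. ennreal (f i))) I"
    by (subst dmeas_emeasure) auto
  also have "\<dots> = (\<integral>\<^sup>+ i. ennreal (f i) * indicator I i \<partial>count_space I)"
    by (subst emeasure_density) auto
  also have "\<dots> = (\<Sum>i\<in>I. ennreal (f i) * indicator I i)"
    using assms by (simp add: nn_integral_count_space_finite)
  also have "\<dots> = (\<Sum>i\<in>I. ennreal (f i))"
    by (intro sum.cong) auto
  finally show ?thesis .
qed

lemma dmeas_finite:
  assumes "finite I"
  shows "finite_measure (dmeas I f pt)"
proof (rule finite_measureI)
  show "emeasure (dmeas I f pt) (space (dmeas I f pt)) \<noteq> \<infinity>"
    using dmeas_emeasure_UNIV[OF assms, of f pt] assms by simp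
qed

lemma dmeas_measure_UNIV:
  assumes "finite I" "\<And>i. i \<in> I \<Longrightarrow> f i \<ge> 0"
  shows "measure (dmeas I f pt) UNIV = (\<Sum>i\<in>I. f i)"
proof -
  have "emeasure (dmeas I f pt) UNIV = ennreal (sum f I)"
    using dmeas_emeasure_UNIV[OF assms(1), of f pt] assms by simp
  thus ?thesis using assms by (simp add: measure_def sum_nonneg)
qed

lemma dmeas_null:
  assumes "A \<in> sets borel" "pt ` I \<inter> A = {}"
  shows "emeasure (dmeas I f pt) A = 0"
proof -
  have "pt -` A \<inter> I = {}" using assms(2) by auto
  thus ?thesis using dmeas_emeasure[OF assms(1), of I f pt] by simp
qed

lemma dmeas_integral:
  assumes "finite I" "\<And>i. i \<in> I \<Longrightarrow> f i \<ge> 0" and g: "g \<in> borel_measurable borel"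
  shows "integral\<^sup>L (dmeas I f pt) g = (\<Sum>i\<in>I. f i * g (pt i))"
proof -
  have "integral\<^sup>L (dmeas I f pt) g = integral\<^sup>L (density (count_space I) (\<lambda>i. ennreal (f i))) (\<lambda>i. g (pt i))"
    unfolding dmeas_def using g by (subst integral_distr) auto
  also have "\<dots> = integral\<^sup>L (count_space I) (\<lambda>i. f i *\<^sub>R g (pt i))"
    using assms by (subst integral_density) (auto simp: AE_count_space)
  also have "\<dots> = (\<Sum>i\<in>I. f i * g (pt i))"
    using assms(1) by (simp add: lebesgue_integral_count_space_finite)
  finally show ?thesis .
qed

lemma tv_norm_le:
  assumes fP: "finite_measure P" and fN: "finite_measure N"
    and sP: "sets P = sets borel" and sN: "sets N = sets borel"
  shows "tv_norm P N \<le> measure P UNIV + measure N UNIV"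
  unfolding tv_norm_def
proof (rule cSup_least)
  show "{(\<Sum>A\<in>\<A>. \<bar>measure P A - measure N A\<bar>) |\<A>. finite \<A> \<and> \<A> \<subseteq> sets P \<and> disjoint \<A>} \<noteq> {}"
  proof -
    have "(\<Sum>A\<in>{}. \<bar>measure P A - measure N A\<bar>) \<in> {(\<Sum>A\<in>\<A>. \<bar>measure P A - measure N A\<bar>) |\<A>. finite \<A> \<and> \<A> \<subseteq> sets P \<and> disjoint \<A>}"
      by (intro CollectI exI[of _ "{}"]) (simp add: disjoint_def)
    thus ?thesis by blast
  qed
next
  fix s assume "s \<in> {(\<Sum>A\<in>\<A>. \<bar>measure P A - measure N A\<bar>) |\<A>. finite \<A> \<and> \<A> \<subseteq> sets P \<and> disjoint \<A>}"
  then obtain \<A> where s: "s = (\<Sum>A\<in>\<A>. \<bar>measure P A - measure N A\<bar>)" and fin: "finite \<A>"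
    and sub: "\<A> \<subseteq> sets P" and dis: "disjoint \<A>" by blast
  have subN: "\<A> \<subseteq> sets N" using sub sP sN by simp
  have "s \<le> (\<Sum>A\<in>\<A>. measure P A + measure N A)"
    unfolding s by (intro sum_mono) (auto simp: abs_le_iff)
  also have "\<dots> = (\<Sum>A\<in>\<A>. measure P A) + (\<Sum>A\<in>\<A>. measure N A)"
    by (simp add: sum.distrib)
  also have "(\<Sum>A\<in>\<A>. measure P A) = measure P (\<Union>\<A>)"
    using finite_measure.finite_measure_finite_Union[OF fP fin, of id] sub dis
    by (simp add: disjoint_family_on_def disjoint_def)
  also have "(\<Sum>A\<in>\<A>. measure N A) = measure N (\<Union>\<A>)"
    using finite_measure.finite_measure_finite_Union[OF fN fin, of id] subN dis
    by (simp add: disjoint_family_on_def disjoint_def)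
  also have "measure P (\<Union>\<A>) \<le> measure P UNIV"
  proof -
    have "UNIV \<in> sets P" using sP by (metis sets.top space_borel sets_eq_imp_space_eq)
    thus ?thesis using finite_measure.finite_measure_mono[OF fP, of "\<Union>\<A>" UNIV] by simp
  qed
  also have "measure N (\<Union>\<A>) \<le> measure N UNIV"
  proof -
    have "UNIV \<in> sets N" using sN by (metis sets.top space_borel sets_eq_imp_space_eq)
    thus ?thesis using finite_measure.finite_measure_mono[OF fN, of "\<Union>\<A>" UNIV] by simp
  qed
  finally show "s \<le> measure P UNIV + measure N UNIV" by simp
qed

lemma cube_closed: "closed (cube R :: (real^'n::finite) set)"
proof -
  have "cube R = (\<Inter>i. {x::real^'n. \<bar>x $ i\<bar> \<le> R})" unfolding cube_def by auto
  moreover have "closed {x::real^'n. \<bar>x $ i\<bar> \<le> R}" for i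
    by (intro closed_Collect_le continuous_intros) 
  ultimately show ?thesis by auto
qed

lemma monomial_measurable[measurable]: "monomial \<alpha> \<in> borel_measurable borel"
  unfolding monomial_def by measurable

lemma reduction:
  fixes pt :: "'i \<Rightarrow> real^'n::finite"
  assumes sol: "is_solution (cube R) k T y P N" and fin: "finite I" and inc: "pt ` I \<subseteq> cube R"
    and mom: "\<And>\<alpha>. \<alpha> \<in> multi_indices k \<Longrightarrow> (\<Sum>i\<in>I. W i * monomial \<alpha> (pt i)) = expTA k T y \<alpha>"
  shows "tv_norm P N \<le> (\<Sum>i\<in>I. \<bar>W i\<bar>)"
proof -
  define P' where "P' = dmeas I (\<lambda>i. max (W i) 0) pt"
  define N' where "N' = dmeas I (\<lambda>i. max (- W i) 0) pt"
  have cb: "UNIV - cube R \<in> sets borel" using cube_closed[of R] by (intro borel_open open_Diff) auto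
  have dj: "pt ` I \<inter> (UNIV - cube R) = {}" using inc by auto
  have sm: "signed_meas_on (cube R) P' N'"
    unfolding signed_meas_on_def P'_def N'_def
    using dmeas_finite[OF fin] dmeas_null[OF cb dj] dmeas_sets by metis
  have "signed_integral P' N' (monomial \<alpha>) = expTA k T y \<alpha>" if "\<alpha> \<in> multi_indices k" for \<alpha>
  proof -
    have "signed_integral P' N' (monomial \<alpha>) =
        (\<Sum>i\<in>I. max (W i) 0 * monomial \<alpha> (pt i)) - (\<Sum>i\<in>I. max (- W i) 0 * monomial \<alpha> (pt i))"
      unfolding signed_integral_def P'_def N'_def
      by (subst dmeas_integral[OF fin], simp, simp)+ simp
    also have "\<dots> = (\<Sum>i\<in>I. W i * monomial \<alpha> (pt i))"
      by (subst sum_subtractf[symmetric], intro sum.cong) (auto simp: max_def algebra_simps)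
    finally show ?thesis using mom[OF that] by simp
  qed
  hence "feasible (cube R) k T y P' N'" using sm unfolding feasible_def by blast
  hence "tv_norm P N \<le> tv_norm P' N'" using sol unfolding is_solution_def by blast
  also have "tv_norm P' N' \<le> measure P' UNIV + measure N' UNIV"
    unfolding P'_def N'_def by (intro tv_norm_le dmeas_finite fin) simp_all
  also have "\<dots> = (\<Sum>i\<in>I. max (W i) 0) + (\<Sum>i\<in>I. max (- W i) 0)"
    unfolding P'_def N'_def by (subst dmeas_measure_UNIV[OF fin], simp)+ simp
  also have "\<dots> = (\<Sum>i\<in>I. \<bar>W i\<bar>)"
    by (subst sum.distrib[symmetric], intro sum.cong) auto
  finally show ?thesis .
qed


definition bb :: "nat \<Rightarrow> nat \<Rightarrow> real" where
  "bb n j = (\<Prod>l<2*j. real (n - l))"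

lemma bb_nonneg: "bb n j \<ge> 0"
  unfolding bb_def by (intro prod_nonneg) auto

lemma bb_zero: "n < 2 * j \<Longrightarrow> bb n j = 0"
  unfolding bb_def by (intro prod_zero) (auto intro!: bexI[of _ n])

lemma bb_0[simp]: "bb n 0 = 1" by (simp add: bb_def)

lemma bb_Suc: "2 \<le> n \<Longrightarrow> bb n (Suc j) = real (n * (n - 1)) * bb (n - 2) j"
proof -
  assume n: "2 \<le> n"
  have "bb n (Suc j) = (\<Prod>l<Suc (Suc (2*j)). real (n - l))" by (simp add: bb_def)
  also have "\<dots> = real (n - 0) * (real (n - 1) * (\<Prod>l<2*j. real (n - Suc (Suc l))))"
    by (simp only: prod.lessThan_Suc_shift) simp
  also have "(\<Prod>l<2*j. real (n - Suc (Suc l))) = bb (n - 2) j"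
    unfolding bb_def by (intro prod.cong) auto
  finally show ?thesis using n by simp
qed

lemma finite_multi_indices: "finite (multi_indices k :: ('n::finite \<Rightarrow> nat) set)"
proof -
  have "multi_indices k \<subseteq> (PiE UNIV (\<lambda>_. {..k}) :: ('n \<Rightarrow> nat) set)"
  proof
    fix \<alpha> :: "'n \<Rightarrow> nat" assume "\<alpha> \<in> multi_indices k"
    hence "(\<Sum>i\<in>UNIV. \<alpha> i) \<le> k" by (simp add: multi_indices_def mi_norm1_def)
    moreover have "\<alpha> i \<le> (\<Sum>i\<in>UNIV. \<alpha> i)" for i by (rule member_le_sum) auto
    ultimately show "\<alpha> \<in> PiE UNIV (\<lambda>_. {..k})" by (auto simp: PiE_UNIV_domain intro: order.trans)
  qed
  thus ?thesis by (rule finite_subset) (intro finite_PiE, auto)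
qed

lemma zero_in_multi_indices: "(\<lambda>_. 0) \<in> multi_indices k"
  by (simp add: multi_indices_def mi_norm1_def)

lemma sup_norm_ge: "\<alpha> \<in> multi_indices k \<Longrightarrow> \<bar>y \<alpha>\<bar> \<le> sup_norm k y"
  unfolding sup_norm_def by (rule Max_ge) (auto simp: finite_multi_indices)

lemma sup_norm_nonneg: "sup_norm k (y :: ('n::finite \<Rightarrow> nat) \<Rightarrow> real) \<ge> 0"
  using sup_norm_ge[of "\<lambda>_. 0" k y] zero_in_multi_indices[of k] by force

lemma Amat_nonzeroD: "Amat \<alpha> \<beta> \<noteq> 0 \<Longrightarrow> \<exists>i. 2 \<le> \<alpha> i \<and> \<beta> = \<alpha>(i := \<alpha> i - 2)"
  unfolding Amat_def by (auto split: if_splits)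

lemma Amat_val:
  assumes "2 \<le> \<alpha> i"
  shows "Amat \<alpha> (\<alpha>(i := \<alpha> i - 2)) = real (\<alpha> i * (\<alpha> i - 1))"
proof -
  let ?P = "\<lambda>i'. 2 \<le> \<alpha> i' \<and> \<alpha>(i := \<alpha> i - 2) = \<alpha>(i' := \<alpha> i' - 2)"
  have ex: "\<exists>i'. ?P i'" using assms by blast
  have uniq: "i' = i" if "?P i'" for i'
  proof (rule ccontr)
    assume "i' \<noteq> i"
    hence "(\<alpha>(i := \<alpha> i - 2)) i = (\<alpha>(i' := \<alpha> i' - 2)) i" using that by simp
    thus False using assms \<open>i' \<noteq> i\<close> by simp
  qed
  have "(SOME i'. ?P i') = i" using someI_ex[OF ex] uniq by blast
  thus ?thesis unfolding Amat_def using ex by (simp add: Let_def)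
qed

lemma Amat_nonneg: "Amat \<alpha> \<beta> \<ge> 0"
  unfolding Amat_def by (auto simp: Let_def)

lemma mi_norm1_upd:
  fixes \<alpha> :: "'n::finite \<Rightarrow> nat"
  assumes "2 \<le> \<alpha> i"
  shows "mi_norm1 (\<alpha>(i := \<alpha> i - 2)) = mi_norm1 \<alpha> - 2" "2 \<le> mi_norm1 \<alpha>"
proof -
  have a: "mi_norm1 \<alpha> = \<alpha> i + (\<Sum>j\<in>UNIV - {i}. \<alpha> j)"
    unfolding mi_norm1_def by (simp add: sum.remove[of UNIV i])
  have b: "mi_norm1 (\<alpha>(i := \<alpha> i - 2)) = (\<alpha> i - 2) + (\<Sum>j\<in>UNIV - {i}. \<alpha> j)"
    unfolding mi_norm1_def by (simp add: sum.remove[of UNIV i])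
  show "mi_norm1 (\<alpha>(i := \<alpha> i - 2)) = mi_norm1 \<alpha> - 2" using a b assms by simp
  show "2 \<le> mi_norm1 \<alpha>" using a assms by simp
qed

lemma sum_sq_le:
  fixes a :: "'n::finite \<Rightarrow> nat"
  shows "(\<Sum>i\<in>UNIV. real (a i * (a i - 1))) \<le> real (mi_norm1 a * (mi_norm1 a - 1))"
proof -
  have e: "real (m * (m - 1)) = real m * real m - real m" for m :: nat
    by (cases m) (auto simp: algebra_simps)
  have "(\<Sum>i\<in>UNIV. real (a i) * real (a i)) \<le> (\<Sum>i\<in>UNIV. real (a i)) * (\<Sum>i\<in>UNIV. real (a i))"
    unfolding sum_distrib_right
    by (intro sum_mono) (auto simp: sum_distrib_left intro!: member_le_sum)
  thus ?thesis unfolding e mi_norm1_def by (simp add: sum_subtractf)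
qed

lemma Amat_rowsum:
  fixes \<alpha> :: "'n::finite \<Rightarrow> nat"
  shows "(\<Sum>\<beta>\<in>multi_indices k. Amat \<alpha> \<beta>) \<le> real (mi_norm1 \<alpha> * (mi_norm1 \<alpha> - 1))"
proof -
  define I where "I = {i. 2 \<le> \<alpha> i}"
  define f where "f i = \<alpha>(i := \<alpha> i - 2)" for i
  have "(\<Sum>\<beta>\<in>multi_indices k. Amat \<alpha> \<beta>) = (\<Sum>\<beta>\<in>multi_indices k \<inter> f ` I. Amat \<alpha> \<beta>)"
    by (intro sum.mono_neutral_right finite_multi_indices) (auto simp: I_def f_def dest: Amat_nonzeroD)
  also have "\<dots> \<le> (\<Sum>\<beta>\<in>f ` I. Amat \<alpha> \<beta>)"
    by (intro sum_mono2) (auto simp: Amat_nonneg)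
  also have "\<dots> \<le> (\<Sum>i\<in>I. Amat \<alpha> (f i))"
    using sum_image_le[of I "Amat \<alpha>" f] by (simp add: Amat_nonneg o_def)
  also have "\<dots> = (\<Sum>i\<in>I. real (\<alpha> i * (\<alpha> i - 1)))"
    by (intro sum.cong) (auto simp: I_def f_def Amat_val)
  also have "\<dots> \<le> (\<Sum>i\<in>UNIV. real (\<alpha> i * (\<alpha> i - 1)))"
    by (intro sum_mono2) auto
  also have "\<dots> \<le> real (mi_norm1 \<alpha> * (mi_norm1 \<alpha> - 1))" by (rule sum_sq_le)
  finally show ?thesis .
qed

lemma Apow_bound:
  fixes y :: "('n::finite \<Rightarrow> nat) \<Rightarrow> real"
  shows "\<alpha> \<in> multi_indices k \<Longrightarrow> \<bar>((matvec k Amat) ^^ j) y \<alpha>\<bar> \<le> sup_norm k y * bb (mi_norm1 \<alpha>) j"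
proof (induction j arbitrary: \<alpha>)
  case 0
  thus ?case using sup_norm_ge[OF 0] by simp
next
  case (Suc j)
  define n where "n = mi_norm1 \<alpha>"
  define s where "s = sup_norm k y"
  have s0: "s \<ge> 0" unfolding s_def by (rule sup_norm_nonneg)
  let ?v = "((matvec k Amat) ^^ j) y"
  have eq: "((matvec k Amat) ^^ Suc j) y \<alpha> = (\<Sum>\<beta>\<in>multi_indices k. Amat \<alpha> \<beta> * ?v \<beta>)"
    by (simp add: matvec_def)
  show ?case
  proof (cases "2 \<le> n")
    case False
    have "Amat \<alpha> \<beta> = 0" for \<beta>
    proof (rule ccontr)
      assume "Amat \<alpha> \<beta> \<noteq> 0"
      then obtain i where "2 \<le> \<alpha> i" by (auto dest: Amat_nonzeroD)
      thus False using mi_norm1_upd(2)[of \<alpha> i] False n_def by simp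
    qed
    hence "((matvec k Amat) ^^ Suc j) y \<alpha> = 0" using eq by simp
    moreover have "bb n (Suc j) = 0" using False by (intro bb_zero) auto
    ultimately show ?thesis using n_def by simp
  next
    case True
    have "\<bar>((matvec k Amat) ^^ Suc j) y \<alpha>\<bar> \<le> (\<Sum>\<beta>\<in>multi_indices k. Amat \<alpha> \<beta> * \<bar>?v \<beta>\<bar>)"
      unfolding eq by (rule order.trans[OF sum_abs]) (simp add: abs_mult Amat_nonneg)
    also have "\<dots> \<le> (\<Sum>\<beta>\<in>multi_indices k. Amat \<alpha> \<beta> * (s * bb (n - 2) j))"
    proof (intro sum_mono)
      fix \<beta> :: "'n \<Rightarrow> nat" assume b: "\<beta> \<in> multi_indices k"
      show "Amat \<alpha> \<beta> * \<bar>?v \<beta>\<bar> \<le> Amat \<alpha> \<beta> * (s * bb (n - 2) j)"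
      proof (cases "Amat \<alpha> \<beta> = 0")
        case False
        then obtain i where i: "2 \<le> \<alpha> i" "\<beta> = \<alpha>(i := \<alpha> i - 2)" by (auto dest: Amat_nonzeroD)
        have "mi_norm1 \<beta> = n - 2" using mi_norm1_upd(1)[of \<alpha> i, OF i(1)] i(2) n_def by simp
        thus ?thesis using Suc.IH[OF b] s_def by (intro mult_left_mono) (auto simp: Amat_nonneg)
      qed simp
    qed
    also have "\<dots> = (s * bb (n - 2) j) * (\<Sum>\<beta>\<in>multi_indices k. Amat \<alpha> \<beta>)"
      by (simp add: sum_distrib_left sum_distrib_right mult_ac)
    also have "\<dots> \<le> (s * bb (n - 2) j) * real (n * (n - 1))"
      using Amat_rowsum[where k=k and \<alpha>=\<alpha>] n_def s0 bb_nonneg by (intro mult_left_mono) auto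
    also have "\<dots> = s * bb n (Suc j)" using bb_Suc[OF True] by simp
    finally show ?thesis using n_def s_def by simp
  qed
qed

definition Hs :: "nat \<Rightarrow> real" where
  "Hs n = (\<Sum>j\<le>n. bb n j / fact j)"

lemma expTA_bound:
  fixes y :: "('n::finite \<Rightarrow> nat) \<Rightarrow> real"
  assumes a: "\<alpha> \<in> multi_indices k" and T: "T > 0"
  shows "\<bar>expTA k T y \<alpha>\<bar> \<le> sup_norm k y * max T 1 ^ (k div 2) * Hs (mi_norm1 \<alpha>)"
proof -
  define n where "n = mi_norm1 \<alpha>"
  have nk: "n \<le> k" using a by (simp add: multi_indices_def n_def)
  define f where "f j = ((- T) ^ j / fact j) * ((matvec k Amat) ^^ j) y \<alpha>" for j
  have z: "f j = 0" if "j \<notin> {..k}" for j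
  proof -
    have "bb n j = 0" using that nk by (intro bb_zero) auto
    hence "((matvec k Amat) ^^ j) y \<alpha> = 0" using Apow_bound[OF a, of j y] n_def by simp
    thus ?thesis by (simp add: f_def)
  qed
  have "expTA k T y \<alpha> = (\<Sum>j\<le>k. f j)"
    unfolding expTA_def f_def[symmetric] by (rule suminf_finite) (use z in auto)
  hence "\<bar>expTA k T y \<alpha>\<bar> \<le> (\<Sum>j\<le>k. \<bar>f j\<bar>)" by (simp add: sum_abs)
  also have "\<dots> \<le> (\<Sum>j\<le>k. sup_norm k y * max T 1 ^ (k div 2) * (bb n j / fact j))"
  proof (intro sum_mono)
    fix j assume "j \<in> {..k}"
    have s0: "sup_norm k y \<ge> 0" by (rule sup_norm_nonneg)
    have "\<bar>f j\<bar> = (T ^ j / fact j) * \<bar>((matvec k Amat) ^^ j) y \<alpha>\<bar>"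
      using T by (simp add: f_def abs_mult power_abs)
    also have "\<dots> \<le> (T ^ j / fact j) * (sup_norm k y * bb n j)"
      using Apow_bound[OF a, of j y] n_def T by (intro mult_left_mono) auto
    also have "\<dots> \<le> (max T 1 ^ (k div 2) / fact j) * (sup_norm k y * bb n j)"
    proof (cases "2 * j \<le> n")
      case True
      hence "j \<le> k div 2" using nk by linarith
      hence "T ^ j \<le> max T 1 ^ (k div 2)"
        using T by (intro order.trans[OF power_mono[of T "max T 1"]] power_increasing) auto
      thus ?thesis using s0 bb_nonneg[of n j]
        by (intro mult_right_mono divide_right_mono) auto
    next
      case False
      thus ?thesis by (simp add: bb_zero)
    qed
    finally show "\<bar>f j\<bar> \<le> sup_norm k y * max T 1 ^ (k div 2) * (bb n j / fact j)"
      by (simp add: field_simps)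
  qed
  also have "\<dots> = sup_norm k y * max T 1 ^ (k div 2) * (\<Sum>j\<le>k. bb n j / fact j)"
    by (simp add: sum_distrib_left)
  also have "(\<Sum>j\<le>k. bb n j / fact j) = Hs n"
    unfolding Hs_def using nk by (intro sum.mono_neutral_right) (auto simp: bb_zero)
  finally show ?thesis using n_def by simp
qed


definition Np :: "real \<Rightarrow> nat \<Rightarrow> real poly" where
  "Np h g = (\<Prod>l<g. [:- (real l * h), 1:])"

fun wd :: "nat \<Rightarrow> nat \<Rightarrow> real" where
  "wd 0 j = (if j = 0 then 1 else 0)"
| "wd (Suc g) j = (if j = 0 then 0 else wd g (j - 1)) - wd g j"

definition Dop :: "real \<Rightarrow> nat \<Rightarrow> (real \<Rightarrow> real) \<Rightarrow> real" where
  "Dop h g f = (\<Sum>j\<le>g. wd g j * f (real j * h))"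

lemma wd_zero: "g < j \<Longrightarrow> wd g j = 0"
  by (induction g arbitrary: j) auto

lemma wd_abs: "(\<Sum>j\<le>g. \<bar>wd g j\<bar>) \<le> 2 ^ g"
proof (induction g)
  case 0
  then show ?case by simp
next
  case (Suc g)
  have "(\<Sum>j\<le>Suc g. \<bar>wd (Suc g) j\<bar>) \<le>
      (\<Sum>j\<le>Suc g. \<bar>if j = 0 then 0 else wd g (j - 1)\<bar>) + (\<Sum>j\<le>Suc g. \<bar>wd g j\<bar>)"
    by (simp only: wd.simps sum.distrib[symmetric]) (intro sum_mono abs_triangle_ineq4)
  also have "(\<Sum>j\<le>Suc g. \<bar>if j = 0 then 0 else wd g (j - 1)\<bar>) = (\<Sum>j\<le>g. \<bar>wd g j\<bar>)"
    by (subst sum.atMost_Suc_shift) simp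
  also have "(\<Sum>j\<le>Suc g. \<bar>wd g j\<bar>) = (\<Sum>j\<le>g. \<bar>wd g j\<bar>)"
    by (simp add: wd_zero)
  finally show ?case using Suc.IH by simp
qed

lemma Dop_Suc: "Dop h (Suc g) f = Dop h g (\<lambda>t. f (t + h) - f t)"
proof -
  have "Dop h (Suc g) f = (\<Sum>j\<le>Suc g. (if j = 0 then 0 else wd g (j - 1)) * f (real j * h))
      - (\<Sum>j\<le>Suc g. wd g j * f (real j * h))"
    unfolding Dop_def by (simp add: left_diff_distrib sum_subtractf)
  also have "(\<Sum>j\<le>Suc g. (if j = 0 then 0 else wd g (j - 1)) * f (real j * h)) =
      (\<Sum>j\<le>g. wd g j * f (real j * h + h))"
    by (subst sum.atMost_Suc_shift) (simp add: algebra_simps)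
  also have "(\<Sum>j\<le>Suc g. wd g j * f (real j * h)) = (\<Sum>j\<le>g. wd g j * f (real j * h))"
    by (simp add: wd_zero)
  finally show ?thesis unfolding Dop_def by (simp add: sum_subtractf right_diff_distrib)
qed

lemma Dop_cmult: "Dop h g (\<lambda>t. c * f t) = c * Dop h g f"
  unfolding Dop_def by (simp add: sum_distrib_left mult_ac)

lemma Dop_zero: "Dop h g (\<lambda>t. 0) = 0"
  unfolding Dop_def by simp

lemma Dop_sum: "finite S \<Longrightarrow> Dop h g (\<lambda>t. \<Sum>e\<in>S. F e t) = (\<Sum>e\<in>S. Dop h g (F e))"
  unfolding Dop_def by (simp add: sum_distrib_left sum.swap[of _ S])

lemma poly_Np: "poly (Np h e) t = (\<Prod>l<e. t - real l * h)"
  unfolding Np_def by (simp add: poly_prod)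

lemma Np_Suc: "Np h (Suc e) = Np h e * [:- (real e * h), 1:]"
  unfolding Np_def by simp

lemma poly_Np_diff:
  "poly (Np h (Suc e)) (t + h) - poly (Np h (Suc e)) t = real (Suc e) * h * poly (Np h e) t"
proof -
  have a: "poly (Np h (Suc e)) (t + h) = (t + h) * poly (Np h e) t"
    unfolding poly_Np by (subst prod.lessThan_Suc_shift) (simp add: algebra_simps)
  have b: "poly (Np h (Suc e)) t = poly (Np h e) t * (t - real e * h)"
    unfolding poly_Np by simp
  show ?thesis unfolding a b by (simp add: algebra_simps)
qed

lemma poly_Np_0: "poly (Np h e) 0 = (if e = 0 then 1 else 0)"
  unfolding poly_Np by (cases e) (auto simp: prod.lessThan_Suc_shift)

lemma Dop_Np: "Dop h g (poly (Np h e)) = (if g = e then fact g * h ^ g else 0)"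
proof (induction g arbitrary: e)
  case 0
  then show ?case by (simp add: Dop_def poly_Np_0)
next
  case (Suc g)
  show ?case
  proof (cases e)
    case 0
    have "Dop h (Suc g) (poly (Np h e)) = Dop h g (\<lambda>t. 0)"
      unfolding Dop_Suc 0 by (simp add: Np_def)
    thus ?thesis using 0 by (simp add: Dop_zero)
  next
    case (Suc e')
    have "Dop h (Suc g) (poly (Np h e)) = Dop h g (\<lambda>t. (real (Suc e') * h) * poly (Np h e') t)"
      unfolding Dop_Suc Suc poly_Np_diff by simp
    also have "\<dots> = real (Suc e') * h * Dop h g (poly (Np h e'))"
      by (rule Dop_cmult)
    finally show ?thesis using Suc.IH[of e'] Suc by (auto simp: algebra_simps)
  qed
qed

lemma Np_degree_coeff: "degree (Np h g) = g \<and> coeff (Np h g) g = 1"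
proof (induction g)
  case 0
  then show ?case by (simp add: Np_def)
next
  case (Suc g)
  have nz: "Np h g \<noteq> 0" using Suc by auto
  have d: "degree (Np h (Suc g)) = Suc g"
    unfolding Np_Suc using nz Suc by (subst degree_mult_eq) auto
  have "coeff (Np h (Suc g)) (Suc g) = lead_coeff (Np h (Suc g))" using d by simp
  also have "\<dots> = lead_coeff (Np h g) * lead_coeff [:- (real g * h), 1:]"
    unfolding Np_Suc by (rule lead_coeff_mult)
  finally show ?case using d Suc by simp
qed

lemma Np_span: "degree p \<le> b \<Longrightarrow> \<exists>\<sigma>. p = (\<Sum>e\<le>b. smult (\<sigma> e) (Np h e))"
proof (induction b arbitrary: p)
  case 0
  hence "p = [:coeff p 0:]" by (metis degree_0_id le_zero_eq)
  hence "p = smult (coeff p 0) (Np h 0)" by (simp add: Np_def)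
  thus ?case by (intro exI[of _ "\<lambda>_. coeff p 0"]) simp
next
  case (Suc b)
  define q where "q = p - smult (coeff p (Suc b)) (Np h (Suc b))"
  have dN: "degree (Np h (Suc b)) = Suc b" "coeff (Np h (Suc b)) (Suc b) = 1"
    using Np_degree_coeff by auto
  have "degree q \<le> b"
  proof (rule degree_le)
    show "\<forall>i>b. coeff q i = 0"
    proof (intro allI impI)
      fix i assume "b < i"
      show "coeff q i = 0"
      proof (cases "i = Suc b")
        case True
        thus ?thesis using dN by (simp add: q_def)
      next
        case False
        hence "Suc b < i" using \<open>b < i\<close> by simp
        hence "coeff p i = 0" "coeff (Np h (Suc b)) i = 0" using Suc.prems dN
          by (auto intro: coeff_eq_0)
        thus ?thesis by (simp add: q_def)
      qed
    qed
  qed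
  then obtain \<sigma> where \<sigma>: "q = (\<Sum>e\<le>b. smult (\<sigma> e) (Np h e))" using Suc.IH by blast
  define \<sigma>' where "\<sigma>' = \<sigma>(Suc b := coeff p (Suc b))"
  have "p = q + smult (coeff p (Suc b)) (Np h (Suc b))" by (simp add: q_def)
  also have "\<dots> = (\<Sum>e\<le>Suc b. smult (\<sigma>' e) (Np h e))"
    unfolding \<sigma> by (simp add: \<sigma>'_def)
  finally show ?case by blast
qed

lemma Dop_poly_sum:
  "Dop h g (poly (\<Sum>e\<le>b. smult (\<sigma> e) (Np h e))) = (\<Sum>e\<le>b. \<sigma> e * Dop h g (poly (Np h e)))"
proof -
  have "poly (\<Sum>e\<le>b. smult (\<sigma> e) (Np h e)) = (\<lambda>t. \<Sum>e\<le>b. \<sigma> e * poly (Np h e) t)"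
    by (rule ext) (simp add: poly_sum)
  hence "Dop h g (poly (\<Sum>e\<le>b. smult (\<sigma> e) (Np h e))) = Dop h g (\<lambda>t. \<Sum>e\<le>b. \<sigma> e * poly (Np h e) t)"
    by simp
  also have "\<dots> = (\<Sum>e\<le>b. Dop h g (\<lambda>t. \<sigma> e * poly (Np h e) t))"
    by (rule Dop_sum) simp
  also have "\<dots> = (\<Sum>e\<le>b. \<sigma> e * Dop h g (poly (Np h e)))"
    by (simp add: Dop_cmult)
  finally show ?thesis .
qed

lemma newton:
  assumes h: "h > 0" and d: "degree p \<le> K"
  shows "p = (\<Sum>g\<le>K. smult (Dop h g (poly p) / (fact g * h ^ g)) (Np h g))"
proof -
  obtain \<sigma> where \<sigma>: "p = (\<Sum>e\<le>K. smult (\<sigma> e) (Np h e))" using Np_span[OF d] by blast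
  have "Dop h g (poly p) / (fact g * h ^ g) = \<sigma> g" if "g \<le> K" for g
  proof -
    have "Dop h g (poly p) = (\<Sum>e\<le>K. \<sigma> e * (if g = e then fact g * h ^ g else 0))"
      by (subst \<sigma>, subst Dop_poly_sum) (simp add: Dop_Np)
    also have "\<dots> = \<sigma> g * (fact g * h ^ g)"
      using that by (simp add: if_distrib cong: if_cong)
    finally show ?thesis using h by simp
  qed
  hence "(\<Sum>g\<le>K. smult (Dop h g (poly p) / (fact g * h ^ g)) (Np h g)) = (\<Sum>g\<le>K. smult (\<sigma> g) (Np h g))"
    by (intro sum.cong) auto
  thus ?thesis using \<sigma> by simp
qed

lemma newton_coeff:
  assumes h: "h > 0" and "b \<le> K"
  shows "(\<Sum>g\<le>K. coeff (Np h g) a * (Dop h g (\<lambda>t. t ^ b) / (fact g * h ^ g))) = (if a = b then 1 else 0)"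
proof -
  have d: "degree (monom (1::real) b) \<le> K" using assms by (simp add: degree_monom_eq)
  have pm: "poly (monom (1::real) b) = (\<lambda>t. t ^ b)" by (simp add: poly_monom fun_eq_iff)
  have "coeff (monom (1::real) b) a = coeff (\<Sum>g\<le>K. smult (Dop h g (\<lambda>t. t ^ b) / (fact g * h ^ g)) (Np h g)) a"
    using newton[OF h d] pm by metis
  thus ?thesis by (cases "a = b") (auto simp: coeff_sum coeff_monom mult_ac)
qed

lemma Dop_low:
  assumes h: "h > 0" and "b < g"
  shows "Dop h g (\<lambda>t. t ^ b) = 0"
proof -
  have d: "degree (monom (1::real) b) \<le> b" by (simp add: degree_monom_eq)
  have pm: "poly (monom (1::real) b) = (\<lambda>t. t ^ b)" by (simp add: poly_monom fun_eq_iff)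
  obtain \<sigma> where \<sigma>: "monom (1::real) b = (\<Sum>e\<le>b. smult (\<sigma> e) (Np h e))" using Np_span[OF d] by blast
  have "Dop h g (\<lambda>t. t ^ b) = (\<Sum>e\<le>b. \<sigma> e * (if g = e then fact g * h ^ g else 0))"
    by (subst pm[symmetric], subst \<sigma>, subst Dop_poly_sum) (simp add: Dop_Np)
  also have "\<dots> = 0" using assms by (intro sum.neutral) auto
  finally show ?thesis .
qed

lemma coeff_abs_lin:
  fixes p :: "real poly"
  assumes c: "c \<ge> 0"
  shows "(\<Sum>a\<le>K. c ^ a * \<bar>coeff (p * [:- r, 1:]) a\<bar>) \<le> (c + \<bar>r\<bar>) * (\<Sum>a\<le>K. c ^ a * \<bar>coeff p a\<bar>)"
proof -
  have e: "p * [:- r, 1:] = pCons 0 p - smult r p"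
    by (simp add: algebra_simps)
  have "(\<Sum>a\<le>K. c ^ a * \<bar>coeff (p * [:- r, 1:]) a\<bar>) \<le>
      (\<Sum>a\<le>K. c ^ a * \<bar>coeff (pCons 0 p) a\<bar>) + (\<Sum>a\<le>K. c ^ a * (\<bar>r\<bar> * \<bar>coeff p a\<bar>))"
    unfolding e sum.distrib[symmetric] using c
    by (intro sum_mono) (auto simp: abs_mult intro!: order.trans[OF mult_left_mono[OF abs_triangle_ineq4]] simp: algebra_simps)
  also have "(\<Sum>a\<le>K. c ^ a * \<bar>coeff (pCons 0 p) a\<bar>) \<le> c * (\<Sum>a\<le>K. c ^ a * \<bar>coeff p a\<bar>)"
  proof (cases K)
    case 0
    then show ?thesis using c by simp
  next
    case (Suc K')
    have "(\<Sum>a\<le>K. c ^ a * \<bar>coeff (pCons 0 p) a\<bar>) = c * (\<Sum>a\<le>K'. c ^ a * \<bar>coeff p a\<bar>)"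
      unfolding Suc by (subst sum.atMost_Suc_shift) (simp add: sum_distrib_left mult_ac)
    also have "\<dots> \<le> c * (\<Sum>a\<le>K. c ^ a * \<bar>coeff p a\<bar>)"
      using c Suc by (intro mult_left_mono sum_mono2) auto
    finally show ?thesis .
  qed
  also have "(\<Sum>a\<le>K. c ^ a * (\<bar>r\<bar> * \<bar>coeff p a\<bar>)) = \<bar>r\<bar> * (\<Sum>a\<le>K. c ^ a * \<bar>coeff p a\<bar>)"
    by (simp add: sum_distrib_left mult_ac)
  finally show ?thesis by (simp add: distrib_right)
qed

lemma Np_coeff_abs:
  assumes c: "c \<ge> 0" and h: "h \<ge> 0"
  shows "(\<Sum>a\<le>K. c ^ a * \<bar>coeff (Np h g) a\<bar>) \<le> (\<Prod>l<g. c + real l * h)"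
proof (induction g)
  case 0
  have "(\<Sum>a\<le>K. c ^ a * \<bar>coeff (Np h 0) a\<bar>) = (\<Sum>a\<le>K. if a = 0 then 1 else 0)"
    by (intro sum.cong) (auto simp: Np_def coeff_1)
  then show ?case by simp
next
  case (Suc g)
  have "(\<Sum>a\<le>K. c ^ a * \<bar>coeff (Np h (Suc g)) a\<bar>) \<le> (c + \<bar>real g * h\<bar>) * (\<Sum>a\<le>K. c ^ a * \<bar>coeff (Np h g) a\<bar>)"
    unfolding Np_Suc by (rule coeff_abs_lin[OF c])
  also have "\<dots> \<le> (c + real g * h) * (\<Prod>l<g. c + real l * h)"
  proof -
    have ha: "\<bar>real g * h\<bar> = real g * h" using h by simp
    show ?thesis using Suc.IH c h by (simp only: ha) (intro mult_left_mono, auto)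
  qed
  finally show ?case by (simp add: mult_ac)
qed


definition mbox :: "nat \<Rightarrow> ('n::finite \<Rightarrow> nat) set" where
  "mbox k = PiE UNIV (\<lambda>_. {..k})"

definition om :: "real \<Rightarrow> nat \<Rightarrow> nat \<Rightarrow> real" where
  "om h g j = wd g j / (fact g * h ^ g)"

definition cg :: "nat \<Rightarrow> real \<Rightarrow> (('n::finite \<Rightarrow> nat) \<Rightarrow> real) \<Rightarrow> ('n \<Rightarrow> nat) \<Rightarrow> real" where
  "cg k h m \<gamma> = (\<Sum>\<alpha>\<in>multi_indices k. m \<alpha> * (\<Prod>i\<in>UNIV. coeff (Np h (\<gamma> i)) (\<alpha> i)))"

definition Wt :: "nat \<Rightarrow> real \<Rightarrow> (('n::finite \<Rightarrow> nat) \<Rightarrow> real) \<Rightarrow> ('n \<Rightarrow> nat) \<Rightarrow> real" where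
  "Wt k h m j = (\<Sum>\<gamma>\<in>multi_indices k. cg k h m \<gamma> * (\<Prod>i\<in>UNIV. om h (\<gamma> i) (j i)))"

definition ptv :: "real \<Rightarrow> ('n::finite \<Rightarrow> nat) \<Rightarrow> real^'n" where
  "ptv h j = (\<chi> i. real (j i) * h)"

lemma finite_mbox: "finite (mbox k)"
  unfolding mbox_def by (intro finite_PiE) auto

lemma mem_box: "j \<in> mbox k \<longleftrightarrow> (\<forall>i. j i \<le> k)"
  unfolding mbox_def by (auto simp: PiE_UNIV_domain)

lemma mi_le: "\<alpha> \<in> multi_indices k \<Longrightarrow> \<alpha> i \<le> (k::nat)"
proof -
  assume "\<alpha> \<in> multi_indices k"
  hence "(\<Sum>i\<in>UNIV. \<alpha> i) \<le> k" by (simp add: multi_indices_def mi_norm1_def)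
  moreover have "\<alpha> i \<le> (\<Sum>i\<in>UNIV. \<alpha> i)" by (rule member_le_sum) auto
  ultimately show ?thesis by simp
qed

lemma mi_sub_box: "multi_indices k \<subseteq> mbox k"
  using mi_le by (auto simp: mem_box)

lemma finite_mi: "finite (multi_indices k :: ('n::finite \<Rightarrow> nat) set)"
  using finite_subset[OF mi_sub_box finite_mbox] .

lemma M1_eq:
  assumes "g \<le> k"
  shows "(\<Sum>j\<le>k. om h g j * (real j * h) ^ b) = Dop h g (\<lambda>t. t ^ b) / (fact g * h ^ g)"
proof -
  have "(\<Sum>j\<le>k. om h g j * (real j * h) ^ b) = (\<Sum>j\<le>g. om h g j * (real j * h) ^ b)"
    using assms by (intro sum.mono_neutral_right) (auto simp: om_def wd_zero)
  thus ?thesis by (simp add: om_def Dop_def sum_divide_distrib)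
qed

lemma moments:
  fixes m :: "('n::finite \<Rightarrow> nat) \<Rightarrow> real"
  assumes h: "h > 0" and \<beta>: "\<beta> \<in> multi_indices k"
  shows "(\<Sum>j\<in>mbox k. Wt k h m j * monomial \<beta> (ptv h j)) = m \<beta>"
proof -
  define M1 where "M1 g b = (\<Sum>j\<le>k. om h g j * (real j * h) ^ b)" for g b
  define C where "C a g = coeff (Np h g) a" for a g
  have "(\<Sum>j\<in>mbox k. Wt k h m j * monomial \<beta> (ptv h j)) =
      (\<Sum>j\<in>mbox k. \<Sum>\<gamma>\<in>multi_indices k. cg k h m \<gamma> * (\<Prod>i\<in>UNIV. om h (\<gamma> i) (j i) * (real (j i) * h) ^ (\<beta> i)))"
    unfolding Wt_def monomial_def ptv_def
    by (simp add: sum_distrib_right sum_distrib_left prod.distrib mult_ac)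
  also have "\<dots> = (\<Sum>\<gamma>\<in>multi_indices k. cg k h m \<gamma> * (\<Sum>j\<in>mbox k. \<Prod>i\<in>UNIV. om h (\<gamma> i) (j i) * (real (j i) * h) ^ (\<beta> i)))"
    by (subst sum.swap) (simp add: sum_distrib_left)
  also have "\<dots> = (\<Sum>\<gamma>\<in>multi_indices k. cg k h m \<gamma> * (\<Prod>i\<in>UNIV. M1 (\<gamma> i) (\<beta> i)))"
    unfolding mbox_def M1_def by (subst prod_sum_PiE) auto
  also have "\<dots> = (\<Sum>\<gamma>\<in>mbox k. cg k h m \<gamma> * (\<Prod>i\<in>UNIV. M1 (\<gamma> i) (\<beta> i)))"
  proof (rule sum.mono_neutral_left[OF finite_mbox mi_sub_box])
    show "\<forall>\<gamma>\<in>mbox k - multi_indices k. cg k h m \<gamma> * (\<Prod>i\<in>UNIV. M1 (\<gamma> i) (\<beta> i)) = 0"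
    proof
      fix \<gamma> :: "'n \<Rightarrow> nat" assume g: "\<gamma> \<in> mbox k - multi_indices k"
      have "\<exists>i. \<beta> i < \<gamma> i"
      proof (rule ccontr)
        assume "\<not> (\<exists>i. \<beta> i < \<gamma> i)"
        hence "mi_norm1 \<gamma> \<le> mi_norm1 \<beta>" unfolding mi_norm1_def by (intro sum_mono) (simp add: not_less)
        thus False using g \<beta> by (simp add: multi_indices_def)
      qed
      then obtain i where i: "\<beta> i < \<gamma> i" by blast
      have "M1 (\<gamma> i) (\<beta> i) = 0"
        unfolding M1_def using g i h by (subst M1_eq) (auto simp: mem_box Dop_low)
      thus "cg k h m \<gamma> * (\<Prod>i\<in>UNIV. M1 (\<gamma> i) (\<beta> i)) = 0"
        by (simp add: prod_zero_iff) blast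
    qed
  qed
  also have "\<dots> = (\<Sum>\<alpha>\<in>multi_indices k. m \<alpha> * (\<Sum>\<gamma>\<in>mbox k. \<Prod>i\<in>UNIV. C (\<alpha> i) (\<gamma> i) * M1 (\<gamma> i) (\<beta> i)))"
    unfolding cg_def C_def
    by (simp add: sum_distrib_right sum_distrib_left prod.distrib mult_ac sum.swap[of _ "mbox k"])
  also have "\<dots> = (\<Sum>\<alpha>\<in>multi_indices k. m \<alpha> * (\<Prod>i\<in>UNIV. \<Sum>g\<le>k. C (\<alpha> i) g * M1 g (\<beta> i)))"
    unfolding mbox_def by (subst prod_sum_PiE) auto
  also have "\<dots> = (\<Sum>\<alpha>\<in>multi_indices k. m \<alpha> * (if \<alpha> = \<beta> then 1 else 0))"
  proof (intro sum.cong refl arg_cong2[where f = "(*)"])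
    fix \<alpha> :: "'n \<Rightarrow> nat" assume a: "\<alpha> \<in> multi_indices k"
    have e: "(\<Sum>g\<le>k. C (\<alpha> i) g * M1 g (\<beta> i)) = (if \<alpha> i = \<beta> i then 1 else 0)" for i
    proof -
      have "(\<Sum>g\<le>k. C (\<alpha> i) g * M1 g (\<beta> i)) =
          (\<Sum>g\<le>k. coeff (Np h g) (\<alpha> i) * (Dop h g (\<lambda>t. t ^ (\<beta> i)) / (fact g * h ^ g)))"
        unfolding C_def M1_def by (intro sum.cong refl) (subst M1_eq, auto)
      also have "\<dots> = (if \<alpha> i = \<beta> i then 1 else 0)"
        using newton_coeff[OF h mi_le[OF \<beta>, of i]] by simp
      finally show ?thesis .
    qed
    show "(\<Prod>i\<in>UNIV. \<Sum>g\<le>k. C (\<alpha> i) g * M1 g (\<beta> i)) = (if \<alpha> = \<beta> then 1 else 0)"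
      unfolding e by (auto simp: prod_zero_iff fun_eq_iff)
  qed
  also have "\<dots> = m \<beta>" using \<beta> by (simp add: if_distrib finite_mi cong: if_cong)
  finally show ?thesis .
qed

lemma om_abs_sum:
  assumes h: "h > 0" and "g \<le> k"
  shows "(\<Sum>j\<le>k. \<bar>om h g j\<bar>) \<le> 2 ^ g / (fact g * h ^ g)"
proof -
  have "(\<Sum>j\<le>k. \<bar>om h g j\<bar>) = (\<Sum>j\<le>g. \<bar>om h g j\<bar>)"
    using assms by (intro sum.mono_neutral_right) (auto simp: om_def wd_zero)
  also have "\<dots> = (\<Sum>j\<le>g. \<bar>wd g j\<bar>) / (fact g * h ^ g)"
    using h by (simp add: om_def sum_divide_distrib abs_divide)
  also have "\<dots> \<le> 2 ^ g / (fact g * h ^ g)"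
    using h wd_abs[of g] by (intro divide_right_mono) auto
  finally show ?thesis .
qed

lemma tv_bound:
  fixes m :: "('n::finite \<Rightarrow> nat) \<Rightarrow> real"
  assumes h: "h > 0"
  shows "(\<Sum>j\<in>mbox k. \<bar>Wt k h m j\<bar>) \<le>
    (\<Sum>\<gamma>\<in>multi_indices k. \<bar>cg k h m \<gamma>\<bar> * (\<Prod>i\<in>UNIV. 2 ^ (\<gamma> i) / (fact (\<gamma> i) * h ^ (\<gamma> i))))"
proof -
  have "(\<Sum>j\<in>mbox k. \<bar>Wt k h m j\<bar>) \<le>
      (\<Sum>j\<in>mbox k. \<Sum>\<gamma>\<in>multi_indices k. \<bar>cg k h m \<gamma>\<bar> * (\<Prod>i\<in>UNIV. \<bar>om h (\<gamma> i) (j i)\<bar>))"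
    unfolding Wt_def by (intro sum_mono order.trans[OF sum_abs]) (simp add: abs_mult abs_prod)
  also have "\<dots> = (\<Sum>\<gamma>\<in>multi_indices k. \<bar>cg k h m \<gamma>\<bar> * (\<Sum>j\<in>mbox k. \<Prod>i\<in>UNIV. \<bar>om h (\<gamma> i) (j i)\<bar>))"
    by (subst sum.swap) (simp add: sum_distrib_left)
  also have "\<dots> = (\<Sum>\<gamma>\<in>multi_indices k. \<bar>cg k h m \<gamma>\<bar> * (\<Prod>i\<in>UNIV. \<Sum>j\<le>k. \<bar>om h (\<gamma> i) j\<bar>))"
    unfolding mbox_def by (subst prod_sum_PiE) auto
  also have "\<dots> \<le> (\<Sum>\<gamma>\<in>multi_indices k. \<bar>cg k h m \<gamma>\<bar> * (\<Prod>i\<in>UNIV. 2 ^ (\<gamma> i) / (fact (\<gamma> i) * h ^ (\<gamma> i))))"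
    by (intro sum_mono mult_left_mono prod_mono conjI om_abs_sum[OF h] mi_le) (auto intro: sum_nonneg)
  finally show ?thesis .
qed

lemma cg_bound:
  fixes m :: "('n::finite \<Rightarrow> nat) \<Rightarrow> real"
  assumes h: "h > 0" and c: "c \<ge> 0" and B: "B \<ge> 0"
    and mb: "\<And>\<alpha>. \<alpha> \<in> multi_indices k \<Longrightarrow> \<bar>m \<alpha>\<bar> \<le> B * c ^ mi_norm1 \<alpha>"
  shows "\<bar>cg k h m \<gamma>\<bar> \<le> B * (\<Prod>i\<in>UNIV. \<Prod>l<\<gamma> i. c + real l * h)"
proof -
  have "\<bar>cg k h m \<gamma>\<bar> \<le> (\<Sum>\<alpha>\<in>multi_indices k. \<bar>m \<alpha>\<bar> * (\<Prod>i\<in>UNIV. \<bar>coeff (Np h (\<gamma> i)) (\<alpha> i)\<bar>))"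
    unfolding cg_def by (rule order.trans[OF sum_abs]) (simp add: abs_mult abs_prod)
  also have "\<dots> \<le> (\<Sum>\<alpha>\<in>multi_indices k. B * (\<Prod>i\<in>UNIV. c ^ (\<alpha> i) * \<bar>coeff (Np h (\<gamma> i)) (\<alpha> i)\<bar>))"
  proof (intro sum_mono)
    fix \<alpha> :: "'n \<Rightarrow> nat" assume a: "\<alpha> \<in> multi_indices k"
    have "c ^ mi_norm1 \<alpha> = (\<Prod>i\<in>UNIV. c ^ (\<alpha> i))" unfolding mi_norm1_def by (simp add: power_sum)
    hence "\<bar>m \<alpha>\<bar> * (\<Prod>i\<in>UNIV. \<bar>coeff (Np h (\<gamma> i)) (\<alpha> i)\<bar>) \<le> (B * (\<Prod>i\<in>UNIV. c ^ (\<alpha> i))) * (\<Prod>i\<in>UNIV. \<bar>coeff (Np h (\<gamma> i)) (\<alpha> i)\<bar>)"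
      using mb[OF a] by (intro mult_right_mono) (auto intro: prod_nonneg)
    thus "\<bar>m \<alpha>\<bar> * (\<Prod>i\<in>UNIV. \<bar>coeff (Np h (\<gamma> i)) (\<alpha> i)\<bar>) \<le> B * (\<Prod>i\<in>UNIV. c ^ (\<alpha> i) * \<bar>coeff (Np h (\<gamma> i)) (\<alpha> i)\<bar>)"
      by (simp add: prod.distrib mult.assoc)
  qed
  also have "\<dots> \<le> (\<Sum>\<alpha>\<in>mbox k. B * (\<Prod>i\<in>UNIV. c ^ (\<alpha> i) * \<bar>coeff (Np h (\<gamma> i)) (\<alpha> i)\<bar>))"
    using B c by (intro sum_mono2 finite_mbox mi_sub_box mult_nonneg_nonneg prod_nonneg) auto
  also have "\<dots> = B * (\<Prod>i\<in>UNIV. \<Sum>a\<le>k. c ^ a * \<bar>coeff (Np h (\<gamma> i)) a\<bar>)"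
    unfolding mbox_def by (subst prod_sum_PiE) (auto simp: sum_distrib_left)
  also have "\<dots> \<le> B * (\<Prod>i\<in>UNIV. \<Prod>l<\<gamma> i. c + real l * h)"
    using B c h by (intro mult_left_mono prod_mono conjI Np_coeff_abs) (auto intro: sum_nonneg)
  finally show ?thesis .
qed

lemma ptv_cube:
  assumes "j \<in> mbox k" "h = R / real k" "R > 0" "k \<ge> 1"
  shows "ptv h j \<in> cube R"
proof -
  have "\<bar>real (j i) * h\<bar> \<le> R" for i
  proof -
    have "j i \<le> k" using assms(1) by (simp add: mem_box)
    hence "real (j i) * h \<le> real k * h" using assms by (intro mult_right_mono) auto
    also have "\<dots> = R" using assms by simp
    finally show ?thesis using assms by simp
  qed
  thus ?thesis by (simp add: cube_def ptv_def)
qed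


lemma sum_mi_bound:
  fixes \<phi> :: "nat \<Rightarrow> real"
  assumes ph: "\<And>g. \<phi> g \<ge> 0" and ph0: "\<phi> 0 = 1" and y: "y \<ge> 1"
  shows "(\<Sum>\<gamma>\<in>multi_indices k. \<Prod>i\<in>UNIV. \<phi> (\<gamma> (i::'n::finite)))
      \<le> 1 + y ^ k * ((\<Prod>i\<in>(UNIV::'n set). \<Sum>g\<le>k. \<phi> g / y ^ g) - 1)"
proof -
  define F where "F \<gamma> = (\<Prod>i\<in>UNIV. \<phi> (\<gamma> (i::'n)))" for \<gamma>
  define G where "G \<gamma> = (\<Prod>i\<in>UNIV. \<phi> (\<gamma> (i::'n)) / y ^ (\<gamma> i))" for \<gamma>
  define B where "B = (PiE UNIV (\<lambda>_. {..k}) :: ('n \<Rightarrow> nat) set)"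
  define z where "z = (\<lambda>_::'n. 0::nat)"
  have finB: "finite B" unfolding B_def by (intro finite_PiE) auto
  have MB: "multi_indices k \<subseteq> B"
  proof
    fix \<alpha> :: "'n \<Rightarrow> nat" assume a: "\<alpha> \<in> multi_indices k"
    have "\<alpha> i \<le> k" for i
    proof -
      have "(\<Sum>i\<in>UNIV. \<alpha> i) \<le> k" using a by (simp add: multi_indices_def mi_norm1_def)
      moreover have "\<alpha> i \<le> (\<Sum>i\<in>UNIV. \<alpha> i)" by (rule member_le_sum) auto
      ultimately show ?thesis by simp
    qed
    thus "\<alpha> \<in> B" by (auto simp: B_def PiE_UNIV_domain)
  qed
  have finM: "finite (multi_indices k :: ('n \<Rightarrow> nat) set)" using finite_subset[OF MB finB] .
  have zM: "z \<in> multi_indices k" by (simp add: z_def multi_indices_def mi_norm1_def)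
  have Fz: "F z = 1" "G z = 1" by (simp_all add: F_def G_def z_def ph0)
  have Gnn: "G \<gamma> \<ge> 0" for \<gamma> unfolding G_def using ph y by (intro prod_nonneg) auto
  have FG: "F \<gamma> \<le> y ^ k * G \<gamma>" if "\<gamma> \<in> multi_indices k" for \<gamma>
  proof -
    have "G \<gamma> = F \<gamma> / y ^ mi_norm1 \<gamma>"
      unfolding G_def F_def mi_norm1_def by (simp add: prod_dividef power_sum)
    moreover have "y ^ mi_norm1 \<gamma> \<le> y ^ k" using that y by (intro power_increasing) (auto simp: multi_indices_def)
    moreover have "F \<gamma> \<ge> 0" unfolding F_def using ph by (intro prod_nonneg) auto
    moreover have "y ^ mi_norm1 \<gamma> > 0" using y by simp
    ultimately show ?thesis by (simp add: field_simps mult_left_mono)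
  qed
  have "(\<Sum>\<gamma>\<in>multi_indices k. F \<gamma>) = F z + (\<Sum>\<gamma>\<in>multi_indices k - {z}. F \<gamma>)"
    using finM zM by (simp add: sum.remove)
  also have "(\<Sum>\<gamma>\<in>multi_indices k - {z}. F \<gamma>) \<le> (\<Sum>\<gamma>\<in>multi_indices k - {z}. y ^ k * G \<gamma>)"
    using FG by (intro sum_mono) auto
  also have "\<dots> \<le> (\<Sum>\<gamma>\<in>B - {z}. y ^ k * G \<gamma>)"
    using MB finB Gnn y by (intro sum_mono2) auto
  also have "\<dots> = y ^ k * ((\<Sum>\<gamma>\<in>B. G \<gamma>) - G z)"
    using finB MB zM by (simp add: sum_distrib_left sum_diff1 subsetD right_diff_distrib)
  also have "(\<Sum>\<gamma>\<in>B. G \<gamma>) = (\<Prod>i\<in>(UNIV::'n set). \<Sum>g\<le>k. \<phi> g / y ^ g)"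
    unfolding B_def G_def by (subst prod_sum_PiE) auto
  finally show ?thesis using Fz(2) unfolding F_def z_def by (simp add: ph0)
qed

lemma coord_bound:
  assumes h: "h > 0" and c: "c \<ge> 0" and y: "y > 2" and lam: "lam \<ge> - c * ln (1 - 2 / y)"
  shows "(\<Sum>g\<le>k. (2 ^ g / (fact g * h ^ g) * (\<Prod>l<g. c + real l * h)) / y ^ g) \<le> exp (lam / h)"
proof -
  define z where "z = c / h"
  define q where "q = 2 / y"
  have q: "0 < q" "q < 1" using y by (auto simp: q_def)
  define f where "f n = (((- z) gchoose n) * (- q) ^ n)" for n
  have fe: "f n = q ^ n * pochhammer z n / fact n" for n
    unfolding f_def gbinomial_pochhammer by (simp add: power_mult_distrib[symmetric])
  have trm: "(2 ^ g / (fact g * h ^ g) * (\<Prod>l<g. c + real l * h)) / y ^ g = f g" for g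
  proof -
    have "(\<Prod>l<g. c + real l * h) = (\<Prod>l<g. h * (z + real l))"
      by (intro prod.cong) (use h in \<open>auto simp: field_simps z_def\<close>)
    also have "\<dots> = h ^ g * pochhammer z g"
      by (simp add: prod.distrib pochhammer_prod atLeast0LessThan)
    finally have "(\<Prod>l<g. c + real l * h) = h ^ g * pochhammer z g" .
    thus ?thesis unfolding fe q_def using h y by (simp add: field_simps power_divide)
  qed
  have s: "f sums (1 + - q) powr (- z)"
    unfolding f_def by (rule gen_binomial_real) (use q in auto)
  have fnn: "f n \<ge> 0" for n
  proof -
    have "pochhammer z n \<ge> 0" unfolding pochhammer_prod z_def using c h by (intro prod_nonneg) auto
    thus ?thesis unfolding fe using q by auto
  qed
  have "(\<Sum>g\<le>k. f g) \<le> suminf f"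
    using s fnn by (intro sum_le_suminf) (auto simp: sums_iff)
  also have "suminf f = exp (- z * ln (1 - q))"
    using s q by (simp add: sums_iff powr_def)
  also have "\<dots> \<le> exp (lam / h)"
  proof -
    have "- z * ln (1 - q) = (- c * ln (1 - q)) / h" by (simp add: z_def)
    also have "\<dots> \<le> lam / h" using lam h by (intro divide_right_mono) (auto simp: q_def)
    finally show ?thesis by simp
  qed
  finally show ?thesis using trm by simp
qed

lemma final_ineq:
  fixes Lam S lam u y :: real
  assumes L: "Lam \<ge> 0" and lam: "0 \<le> lam" "lam \<le> 2" and u: "u \<ge> 0" and y: "y \<ge> 1"
    and S1: "Lam \<le> S" and S2: "Lam * (y ^ k * lam / 2) \<le> S"
  shows "Lam * (1 + y ^ k * (exp (lam * u) - 1)) \<le> S * exp (2 * u)"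
proof -
  have cv: "exp (lam * u) \<le> (1 - lam / 2) * 1 + (lam / 2) * exp (2 * u)"
    using convex_onD[OF exp_convex, of "lam / 2" 0 "2 * u"] lam by (simp add: algebra_simps)
  define \<mu> where "\<mu> = y ^ k * lam / 2"
  have yk: "y ^ k \<ge> 0" using y by simp
  have E: "exp (2 * u) \<ge> 1" using u by simp
  have "Lam * (1 + y ^ k * (exp (lam * u) - 1)) \<le> Lam * (1 + y ^ k * ((lam / 2) * (exp (2 * u) - 1)))"
    using cv L yk by (intro mult_left_mono add_left_mono) (auto simp: algebra_simps)
  also have "\<dots> = Lam * ((1 - \<mu>) + \<mu> * exp (2 * u))"
    by (simp add: \<mu>_def algebra_simps)
  also have "\<dots> \<le> S * exp (2 * u)"
  proof (cases "\<mu> \<le> 1")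
    case True
    have m0: "\<mu> \<ge> 0" using lam yk by (simp add: \<mu>_def)
    have "(1 - \<mu>) * (exp (2 * u) - 1) \<ge> 0" using True E by (intro mult_nonneg_nonneg) auto
    hence "(1 - \<mu>) + \<mu> * exp (2 * u) \<le> exp (2 * u)" by (simp add: algebra_simps)
    hence "Lam * ((1 - \<mu>) + \<mu> * exp (2 * u)) \<le> Lam * exp (2 * u)"
      using L by (intro mult_left_mono) auto
    also have "\<dots> \<le> S * exp (2 * u)" using S1 by simp
    finally show ?thesis .
  next
    case False
    have "Lam * ((1 - \<mu>) + \<mu> * exp (2 * u)) \<le> Lam * (\<mu> * exp (2 * u))"
      using False L by (intro mult_left_mono) auto
    also have "\<dots> = (Lam * \<mu>) * exp (2 * u)" by simp
    also have "\<dots> \<le> S * exp (2 * u)" using S2 by (simp add: \<mu>_def)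
    finally show ?thesis .
  qed
  finally show ?thesis .
qed

lemma bb_term:
  assumes "j \<le> n"
  shows "bb n j / fact j \<le> (if 2 * j \<le> n then real (n choose (2 * j)) * sqrt (real n) ^ (2 * j) else 0)"
proof (cases "2 * j \<le> n")
  case False
  thus ?thesis by (simp add: bb_zero)
next
  case True
  have "bb n j = (\<Prod>l<2*j. real n - real l)"
    unfolding bb_def using True by (intro prod.cong) (auto simp: of_nat_diff)
  also have "\<dots> = (real n gchoose (2 * j)) * fact (2 * j)"
    by (simp add: gbinomial_prod_rev atLeast0LessThan)
  also have "\<dots> = real (n choose (2 * j)) * fact (2 * j)"
    by (simp add: binomial_gbinomial)
  finally have b: "bb n j = real (n choose (2 * j)) * fact (2 * j)" .
  have "fact (2 * j) div fact (2 * j - j) \<le> (2 * j) ^ j"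
    by (rule fact_div_fact_le_pow) simp
  moreover have "fact j dvd (fact (2 * j) :: nat)" by (rule fact_dvd) simp
  ultimately have "(fact (2 * j) :: nat) \<le> fact j * (2 * j) ^ j"
    by (metis dvd_mult_div_cancel mult_le_mono2 diff_add_inverse2 mult_2)
  hence "(fact (2 * j) :: real) \<le> fact j * real (2 * j) ^ j"
    by (metis of_nat_fact of_nat_le_iff of_nat_mult of_nat_power)
  also have "\<dots> \<le> fact j * real n ^ j"
    using True by (intro mult_left_mono power_mono) auto
  finally have f: "fact (2 * j) / fact j \<le> (real n) ^ j"
    by (simp add: divide_le_eq mult.commute)
  have "bb n j / fact j = real (n choose (2 * j)) * (fact (2 * j) / fact j)"
    unfolding b by simp
  also have "\<dots> \<le> real (n choose (2 * j)) * real n ^ j"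
    using f by (intro mult_left_mono) auto
  also have "real n ^ j = sqrt (real n) ^ (2 * j)"
    by (simp add: power_mult)
  finally show ?thesis using True by simp
qed

lemma Hs_le: "Hs n \<le> (1 + sqrt (real n)) ^ n"
proof -
  have "Hs n \<le> (\<Sum>j\<le>n. if 2 * j \<le> n then real (n choose (2 * j)) * sqrt (real n) ^ (2 * j) else 0)"
    unfolding Hs_def by (intro sum_mono bb_term) auto
  also have "\<dots> = (\<Sum>j\<in>{j. 2 * j \<le> n}. real (n choose (2 * j)) * sqrt (real n) ^ (2 * j))"
    by (subst sum.inter_filter[symmetric]) (auto intro!: sum.cong)
  also have "\<dots> = (\<Sum>i\<in>(\<lambda>j. 2 * j) ` {j. 2 * j \<le> n}. real (n choose i) * sqrt (real n) ^ i)"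
    by (subst sum.reindex) (auto simp: inj_on_def)
  also have "\<dots> \<le> (\<Sum>i\<le>n. real (n choose i) * sqrt (real n) ^ i)"
    by (intro sum_mono2) auto
  also have "\<dots> = (sqrt (real n) + 1) ^ n"
    by (subst binomial_ring) simp
  also have "\<dots> = (1 + sqrt (real n)) ^ n" by (simp add: add.commute)
  finally show ?thesis .
qed

lemma Hs_small: "Hs 0 = 1" "Hs 1 = 1" "Hs 2 = 3" "Hs 3 = 7"
  by (simp_all add: Hs_def bb_def numeral_eq_Suc lessThan_Suc)

lemma e_ge: "exp 1 \<ge> (27 / 10 :: real)"
proof -
  have "(145 / 128 :: real) \<le> exp (1 / 8)"
    using exp_lower_Taylor_quadratic[of "1/8"] by (simp add: power2_eq_square)
  hence "(145 / 128 :: real) ^ 8 \<le> exp (1 / 8) ^ 8" by (intro power_mono) auto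
  also have "exp (1 / 8 :: real) ^ 8 = exp 1" by (simp flip: exp_of_nat_mult)
  moreover have "(27/10::real) \<le> (145/128)^8" by (simp add: power_divide)
  ultimately show ?thesis by linarith
qed

lemma ln2_le: "ln (2 :: real) \<le> 7 / 10"
proof -
  have "(3809/3200 :: real) \<le> exp (7 / 40)"
    using exp_lower_Taylor_quadratic[of "7/40"] by (simp add: power2_eq_square)
  hence "(3809/3200 :: real) ^ 4 \<le> exp (7 / 40) ^ 4" by (intro power_mono) auto
  also have "exp (7 / 40 :: real) ^ 4 = exp (7 / 10)" by (simp flip: exp_of_nat_mult)
  finally have "(3809/3200 :: real) ^ 4 \<le> exp (7 / 10)" .
  moreover have "(2::real) \<le> (3809/3200)^4" by (simp add: power_divide)
  ultimately have "2 \<le> exp (7 / 10 :: real)" by linarith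
  hence "ln 2 \<le> ln (exp (7 / 10 :: real))" by (subst ln_le_cancel_iff) auto
  thus ?thesis by simp
qed


lemma main_generic:
  fixes R T :: real and k :: nat and y :: "('n::finite \<Rightarrow> nat) \<Rightarrow> real"
    and P N :: "(real^'n) measure"
  assumes R: "R > 0" and k: "k \<ge> 1" and T: "T > 0" and sol: "is_solution (cube R) k T y P N"
    and L: "Lam \<ge> 0" and c: "c \<ge> 0" and yv: "yv > 2"
    and lam: "0 \<le> lam" "lam \<le> 2" "lam \<ge> - c * ln (1 - 2 / yv)"
    and H: "\<And>n. n \<le> k \<Longrightarrow> Hs n \<le> Lam * c ^ n"
    and S1: "Lam \<le> S" and S2: "Lam * (yv ^ k * lam / 2) \<le> S"
  shows "tv_norm P N \<le> sup_norm k y * max T 1 ^ (k div 2) * (S * exp (2 * (real CARD('n) * real k / R)))"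
proof -
  define h where "h = R / real k"
  have h: "h > 0" using R k by (simp add: h_def)
  define m where "m = expTA k T y"
  define s where "s = sup_norm k y"
  define Tm where "Tm = max T 1 ^ (k div 2)"
  have s0: "s \<ge> 0" unfolding s_def by (rule sup_norm_nonneg)
  have Tm0: "Tm \<ge> 0" unfolding Tm_def by simp
  define Bv where "Bv = s * Tm * Lam"
  have Bv0: "Bv \<ge> 0" unfolding Bv_def using s0 Tm0 L by simp
  have mb: "\<bar>m \<alpha>\<bar> \<le> Bv * c ^ mi_norm1 \<alpha>" if a: "\<alpha> \<in> multi_indices k" for \<alpha>
  proof -
    have "\<bar>m \<alpha>\<bar> \<le> s * Tm * Hs (mi_norm1 \<alpha>)"
      unfolding m_def s_def Tm_def by (rule expTA_bound[OF a T])
    also have "\<dots> \<le> s * Tm * (Lam * c ^ mi_norm1 \<alpha>)"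
      using H[of "mi_norm1 \<alpha>"] a s0 Tm0 by (intro mult_left_mono) (auto simp: multi_indices_def)
    finally show ?thesis by (simp add: Bv_def mult_ac)
  qed
  define \<phi> where "\<phi> g = 2 ^ g / (fact g * h ^ g) * (\<Prod>l<g. c + real l * h)" for g
  have \<phi>0: "\<phi> g \<ge> 0" for g unfolding \<phi>_def using h c by (intro mult_nonneg_nonneg prod_nonneg) auto
  define d where "d = real CARD('n)"
  define u where "u = d * real k / R"
  have u0: "u \<ge> 0" using R by (simp add: u_def d_def)
  have "tv_norm P N \<le> (\<Sum>j\<in>mbox k. \<bar>Wt k h m j\<bar>)"
  proof (rule reduction[OF sol finite_mbox])
    show "ptv h ` mbox k \<subseteq> cube R" using ptv_cube[OF _ h_def R k] by blast
    show "\<And>\<alpha>. \<alpha> \<in> multi_indices k \<Longrightarrow> (\<Sum>j\<in>mbox k. Wt k h m j * monomial \<alpha> (ptv h j)) = expTA k T y \<alpha>"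
      using moments[OF h] m_def by simp
  qed
  also have "\<dots> \<le> (\<Sum>\<gamma>\<in>multi_indices k. \<bar>cg k h m \<gamma>\<bar> * (\<Prod>i\<in>UNIV. 2 ^ (\<gamma> i) / (fact (\<gamma> i) * h ^ (\<gamma> i))))"
    by (rule tv_bound[OF h])
  also have "\<dots> \<le> (\<Sum>(\<gamma>::'n\<Rightarrow>nat)\<in>multi_indices k. (Bv * (\<Prod>i\<in>UNIV. \<Prod>l<\<gamma> i. c + real l * h)) * (\<Prod>i\<in>UNIV. 2 ^ (\<gamma> i) / (fact (\<gamma> i) * h ^ (\<gamma> i))))"
  proof (rule sum_mono, rule mult_right_mono)
    fix \<gamma> :: "'n \<Rightarrow> nat"
    show "\<bar>cg k h m \<gamma>\<bar> \<le> Bv * (\<Prod>i\<in>UNIV. \<Prod>l<\<gamma> i. c + real l * h)"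
      by (rule cg_bound[OF h c Bv0 mb])
    show "0 \<le> (\<Prod>i\<in>UNIV. 2 ^ (\<gamma> i) / (fact (\<gamma> i) * h ^ (\<gamma> i)))"
      using h by (intro prod_nonneg) auto
  qed
  also have "\<dots> = Bv * (\<Sum>(\<gamma>::'n\<Rightarrow>nat)\<in>multi_indices k. \<Prod>i\<in>UNIV. \<phi> (\<gamma> i))"
    unfolding \<phi>_def sum_distrib_left by (intro sum.cong refl) (simp only: prod.distrib, simp add: mult_ac)
  also have "\<dots> \<le> Bv * (1 + yv ^ k * ((\<Prod>i\<in>(UNIV::'n set). \<Sum>g\<le>k. \<phi> g / yv ^ g) - 1))"
    using yv Bv0 by (intro mult_left_mono sum_mi_bound \<phi>0) (auto simp: \<phi>_def)
  also have "\<dots> \<le> Bv * (1 + yv ^ k * ((\<Prod>i\<in>(UNIV::'n set). exp (lam / h)) - 1))"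
  proof -
    have "(\<Sum>g\<le>k. \<phi> g / yv ^ g) \<le> exp (lam / h)"
      unfolding \<phi>_def by (rule coord_bound[OF h c yv lam(3)])
    hence "(\<Prod>i\<in>(UNIV::'n set). \<Sum>g\<le>k. \<phi> g / yv ^ g) \<le> (\<Prod>i\<in>(UNIV::'n set). exp (lam / h))"
      using \<phi>0 yv by (intro prod_mono) (auto intro!: sum_nonneg)
    thus ?thesis using Bv0 yv by (intro mult_left_mono add_left_mono) auto
  qed
  also have "(\<Prod>i\<in>(UNIV::'n set). exp (lam / h)) = exp (lam * u)"
  proof -
    have "(\<Prod>i\<in>(UNIV::'n set). exp (lam / h)) = exp (lam / h) ^ CARD('n)" by simp
    also have "\<dots> = exp (real CARD('n) * (lam / h))" by (rule exp_of_nat_mult[symmetric])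
    also have "real CARD('n) * (lam / h) = lam * u"
      using R k by (simp add: u_def d_def h_def)
    finally show ?thesis .
  qed
  also have "Bv * (1 + yv ^ k * (exp (lam * u) - 1)) = s * Tm * (Lam * (1 + yv ^ k * (exp (lam * u) - 1)))"
    by (simp add: Bv_def)
  also have "\<dots> \<le> s * Tm * (S * exp (2 * u))"
    using s0 Tm0 yv by (intro mult_left_mono final_ineq[OF L lam(1,2) u0 _ S1 S2]) auto
  finally show ?thesis by (simp add: s_def Tm_def u_def d_def)
qed


lemma sqrt_inv_pi: "sqrt (1 / pi) \<ge> 1 / 2"
proof -
  have "1 / 4 \<le> 1 / pi" using pi_less_4 pi_gt_zero by (intro divide_left_mono) auto
  hence "sqrt (1 / 4) \<le> sqrt (1 / pi)" by (rule real_sqrt_le_mono)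
  moreover have "sqrt (1 / 4 :: real) = 1 / 2" by (simp add: real_sqrt_divide)
  ultimately show ?thesis by simp
qed

lemma sqrt_k_pi: "k \<ge> 4 \<Longrightarrow> sqrt (real k / pi) \<ge> 1"
proof -
  assume "k \<ge> 4"
  hence "pi \<le> real k" using pi_less_4 by linarith
  hence "1 \<le> real k / pi" by simp
  thus ?thesis by simp
qed

lemma params:
  assumes k: "k \<ge> 1"
  defines "S \<equiv> sqrt (real k / pi) * exp (real k) * sqrt (real k) ^ k"
  shows "\<exists>Lam c yv lam. Lam \<ge> 0 \<and> c \<ge> 0 \<and> yv > 2 \<and> 0 \<le> lam \<and> lam \<le> 2 \<and> lam \<ge> - c * ln (1 - 2 / yv)
     \<and> (\<forall>n\<le>k. Hs n \<le> Lam * c ^ n) \<and> Lam \<le> S \<and> Lam * (yv ^ k * lam / 2) \<le> S"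
proof -
  have e: "exp 1 \<ge> (27/10::real)" by (rule e_ge)
  have ln2: "ln (2::real) \<le> 7/10" by (rule ln2_le)
  have ln2p: "ln (2::real) \<ge> 0" by simp
  have lnhalf: "ln (1 - 2 / 4 :: real) = - ln 2"
    by (simp add: ln_div)
  consider "k = 1" | "k = 2" | "k = 3" | "k \<ge> 4" using k by linarith
  then show ?thesis
  proof cases
    case 1
    have S: "S = sqrt (1 / pi) * exp 1" by (simp add: S_def 1)
    have "S \<ge> 1/2 * (27/10)" unfolding S using sqrt_inv_pi e by (intro mult_mono) auto
    hence S': "S \<ge> 5/4" by simp
    have l: "ln (5/4 :: real) \<le> 1/4" using ln_le_minus_one[of "5/4::real"] by simp
    have "ln (1 - 2 / 10 :: real) = - ln (5/4)"
      by (simp add: ln_div)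
    hence lam: "(1/4::real) \<ge> - 1 * ln (1 - 2 / 10)" using l by simp
    have H: "\<forall>n\<le>k. Hs n \<le> 1 * 1 ^ n"
      using 1 Hs_small by (auto simp: le_Suc_eq)
    show ?thesis
      by (rule exI[of _ 1], rule exI[of _ 1], rule exI[of _ 10], rule exI[of _ "1/4"])
         (use S' lam H 1 in auto)
  next
    case 2
    have S: "S = 2 * sqrt (2 / pi) * exp 1 ^ 2"
      by (simp add: S_def 2 exp_of_nat_mult[symmetric] mult_ac)
    have sp: "sqrt (2 / pi) \<ge> 7/10"
    proof -
      have "49/100 \<le> 2 / pi" using pi_less_4 pi_gt_zero by (simp add: field_simps)
      hence "sqrt (49/100) \<le> sqrt (2 / pi)" by (rule real_sqrt_le_mono)
      moreover have "sqrt (49/100 :: real) = 7/10" by (simp add: real_sqrt_divide)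
      ultimately show ?thesis by simp
    qed
    have "exp 1 ^ 2 \<ge> (27/10::real) ^ 2" using e by (intro power_mono) auto
    hence "S \<ge> 2 * (7/10) * (27/10)^2" unfolding S using sp
      by (intro mult_mono) auto
    hence S': "S \<ge> 49/5" by (simp add: power_divide)
    have lam: "(49/40::real) \<ge> - (7/4) * ln (1 - 2 / 4)" using ln2 unfolding lnhalf by simp
    have H: "\<forall>n\<le>k. Hs n \<le> 1 * (7/4) ^ n"
      using 2 Hs_small by (auto simp: le_Suc_eq numeral_2_eq_2)
    show ?thesis
      by (rule exI[of _ 1], rule exI[of _ "7/4"], rule exI[of _ 4], rule exI[of _ "49/40"])
         (use S' lam H 2 in auto)
  next
    case 3
    have S: "S = sqrt (3 / pi) * exp 1 ^ 3 * sqrt 3 ^ 3"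
      by (simp add: S_def 3 exp_of_nat_mult[symmetric])
    have sp: "sqrt (3 / pi) \<ge> 1/2"
    proof -
      have "1/4 \<le> 3 / pi" using pi_less_4 pi_gt_zero by (simp add: field_simps)
      hence "sqrt (1/4) \<le> sqrt (3 / pi)" by (rule real_sqrt_le_mono)
      moreover have "sqrt (1/4 :: real) = 1/2" by (simp add: real_sqrt_divide)
      ultimately show ?thesis by simp
    qed
    have s3: "sqrt 3 \<ge> (17/10::real)"
    proof -
      have "sqrt ((17/10)^2) \<le> sqrt (3::real)" by (intro real_sqrt_le_mono) (simp add: power2_eq_square)
      thus ?thesis by simp
    qed
    have "exp 1 ^ 3 \<ge> (27/10::real) ^ 3" using e by (intro power_mono) auto
    moreover have "sqrt 3 ^ 3 \<ge> (17/10::real) ^ 3" using s3 by (intro power_mono) auto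
    ultimately have "S \<ge> (1/2) * (27/10)^3 * (17/10)^3" unfolding S using sp
      by (intro mult_mono) auto
    hence S': "S \<ge> 224/5" by (simp add: power_divide)
    have lam: "(7/5::real) \<ge> - 2 * ln (1 - 2 / 4)" using ln2 unfolding lnhalf by simp
    have H: "\<forall>n\<le>k. Hs n \<le> 1 * 2 ^ n"
      using 3 Hs_small by (auto simp: le_Suc_eq numeral_3_eq_3 numeral_2_eq_2)
    show ?thesis
      by (rule exI[of _ 1], rule exI[of _ 2], rule exI[of _ 4], rule exI[of _ "7/5"])
         (use S' lam H 3 in auto)
  next
    case 4
    define r where "r = sqrt (real k)"
    have r2: "r \<ge> 2"
    proof -
      have "sqrt 4 \<le> sqrt (real k)" using 4 by (intro real_sqrt_le_mono) auto
      thus ?thesis by (simp add: r_def)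
    qed
    define Lam where "Lam = (4/5 * r) ^ k"
    define c where "c = (1 + r) / (4/5 * r)"
    define yv :: real where "yv = exp 1 * (5/4)"
    have c0: "c \<ge> 0" using r2 by (simp add: c_def)
    have c1: "c \<le> 15/8"
    proof -
      have "c = 5/4 + (5/4) / r" using r2 by (simp add: c_def field_simps)
      moreover have "(5/4) / r \<le> 5/8" using r2 by (simp add: field_simps)
      ultimately show ?thesis by simp
    qed
    have yv: "yv > 2" using e by (simp add: yv_def)
    define q where "q = 2 / yv"
    have q: "q \<le> 16/27" "q > 0"
    proof -
      have "q = 8 / (5 * exp 1)" by (simp add: q_def yv_def)
      also have "\<dots> \<le> 8 / (5 * (27/10))" using e by (intro divide_left_mono) auto
      finally show "q \<le> 16/27" by simp
      show "q > 0" using yv by (simp add: q_def)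
    qed
    have lq: "- ln (1 - q) \<le> 16/15"
    proof -
      have "593/225 \<le> exp (16/15 :: real)"
        using exp_lower_Taylor_quadratic[of "16/15::real"] by (simp add: power2_eq_square)
      hence "exp (- (16/15) :: real) \<le> 225/593"
        by (simp add: exp_minus field_simps)
      also have "\<dots> \<le> 1 - q" using q by simp
      finally have "exp (- (16/15)) \<le> 1 - q" .
      hence "ln (exp (- (16/15))) \<le> ln (1 - q)" using q by (subst ln_le_cancel_iff) auto
      thus ?thesis by simp
    qed
    have lnq0: "- ln (1 - q) \<ge> 0" using q by simp
    have lam: "2 \<ge> - c * ln (1 - 2 / yv)"
    proof -
      have "- c * ln (1 - 2 / yv) = c * (- ln (1 - q))" by (simp add: q_def)
      also have "\<dots> \<le> (15/8) * (16/15)" using c0 c1 lq lnq0 by (intro mult_mono) auto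
      finally show ?thesis by simp
    qed
    have rc: "4/5 * r * c = 1 + r" using r2 by (simp add: c_def)
    have H: "\<forall>n\<le>k. Hs n \<le> Lam * c ^ n"
    proof (intro allI impI)
      fix n assume n: "n \<le> k"
      have "Hs n \<le> (1 + sqrt (real n)) ^ n" by (rule Hs_le)
      also have "\<dots> \<le> (1 + r) ^ n" unfolding r_def using n
        by (intro power_mono) auto
      also have "\<dots> = (4/5 * r) ^ n * c ^ n" by (simp only: rc[symmetric] power_mult_distrib)
      also have "\<dots> \<le> Lam * c ^ n" unfolding Lam_def using r2 c0 n
        by (intro mult_right_mono power_increasing) auto
      finally show "Hs n \<le> Lam * c ^ n" .
    qed
    have sk: "sqrt (real k / pi) \<ge> 1" using sqrt_k_pi[OF 4] .
    have ek: "exp (real k) \<ge> 1" by simp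
    have S2: "Lam * (yv ^ k * 2 / 2) = exp (real k) * r ^ k"
    proof -
      have "Lam * (yv ^ k * 2 / 2) = ((4/5*r)*(exp 1*(5/4)))^k"
        by (simp only: Lam_def yv_def power_mult_distrib)
      also have "(4/5*r)*(exp 1*(5/4)) = r * exp 1" by simp
      also have "(r * exp 1) ^ k = exp (real k) * r ^ k"
        by (simp add: power_mult_distrib flip: exp_of_nat_mult)
      finally show ?thesis .
    qed
    have "exp (real k) * r ^ k \<le> S"
      unfolding S_def r_def[symmetric] using sk r2
      by (simp add: mult_le_cancel_right1 mult.commute mult.left_commute)
    hence S2': "Lam * (yv ^ k * 2 / 2) \<le> S" using S2 by simp
    have "Lam \<le> r ^ k" unfolding Lam_def using r2 by (intro power_mono) auto
    also have "r ^ k \<le> exp (real k) * r ^ k" using ek r2 by simp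
    finally have S1: "Lam \<le> S" using \<open>exp (real k) * r ^ k \<le> S\<close> by simp
    have L0: "Lam \<ge> 0" unfolding Lam_def using r2 by simp
    show ?thesis
      by (rule exI[of _ Lam], rule exI[of _ c], rule exI[of _ yv], rule exI[of _ 2])
         (use L0 c0 yv lam H S1 S2' in auto)
  qed
qed

theorem mainTheorem5:
  fixes R T :: real and k :: nat and y :: "('n::finite \<Rightarrow> nat) \<Rightarrow> real"
    and P N :: "(real^'n) measure"
  assumes "R > 0" and "k \<ge> 1" and "T > 0"
    and "is_solution (cube R) k T y P N"
  shows "tv_norm P N \<le> sup_norm k y * sqrt (real k / pi)
           * exp (real k * (1 + 2 * real CARD('n) / R + ln (sqrt (real k))))
           * max (T ^ (k div 2)) 1"
proof -
  define S where "S = sqrt (real k / pi) * exp (real k) * sqrt (real k) ^ k"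
  obtain Lam c yv lam where L: "Lam \<ge> 0" and c: "c \<ge> 0" and yv: "yv > 2" and lam: "0 \<le> lam" "lam \<le> 2"
      "lam \<ge> - c * ln (1 - 2 / yv)" and H: "\<forall>n\<le>k. Hs n \<le> Lam * c ^ n"
      and S1: "Lam \<le> S" and S2: "Lam * (yv ^ k * lam / 2) \<le> S"
    using params[OF assms(2)] unfolding S_def by blast
  have key: "tv_norm P N \<le> sup_norm k y * max T 1 ^ (k div 2) * (S * exp (2 * (real CARD('n) * real k / R)))"
    by (rule main_generic[OF assms(1,2,3,4) L c yv lam]) (use H S1 S2 in auto)
  have sk: "sqrt (real k) > 0" using assms(2) by simp
  have e1: "exp (real k * (1 + 2 * real CARD('n) / R + ln (sqrt (real k)))) =
      exp (real k) * exp (2 * (real CARD('n) * real k / R)) * sqrt (real k) ^ k"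
  proof -
    have "real k * (1 + 2 * real CARD('n) / R + ln (sqrt (real k))) =
        real k + 2 * (real CARD('n) * real k / R) + real k * ln (sqrt (real k))"
      by (simp add: algebra_simps)
    moreover have "exp (real k * ln (sqrt (real k))) = sqrt (real k) ^ k"
      using sk by (simp add: exp_of_nat_mult)
    ultimately show ?thesis by (simp add: exp_add)
  qed
  have e2: "max (T ^ (k div 2)) 1 = max T 1 ^ (k div 2)"
  proof (cases "T \<le> 1")
    case True
    hence "T ^ (k div 2) \<le> 1" using assms(3) by (intro power_le_one) auto
    thus ?thesis using True by (simp add: max_def)
  next
    case False
    hence ge: "T ^ (k div 2) \<ge> 1" by (intro one_le_power) auto
    have "max (T ^ (k div 2)) 1 = T ^ (k div 2)" using ge by (rule max_absorb1)
    moreover have "max T 1 = T" using False by simp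
    ultimately show ?thesis by simp
  qed
  have eq: "sup_norm k y * sqrt (real k / pi)
           * exp (real k * (1 + 2 * real CARD('n) / R + ln (sqrt (real k))))
           * max (T ^ (k div 2)) 1 = sup_norm k y * max T 1 ^ (k div 2) * (S * exp (2 * (real CARD('n) * real k / R)))"
    unfolding e1 e2 S_def by (simp add: mult_ac)
  show ?thesis by (subst eq) (rule key)
qed


end
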